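(* Let $L>0$, $V\in C^0([0,L];\mathbb{R})$, $\varepsilon>0$, $q_\varepsilon\in L^\infty(0,L;\mathbb{R})$. For all $E\in\mathbb{R}$ and all $\psi\in H^2(0,L)\cap H^1_0(0,L)$ with $-\varepsilon^2\psi''+(V+q_\varepsilon)\psi=E\psi$, and all $x,y\in[0,L]$, $$\mathscr{E}(x)\le\exp\Big(\frac1\varepsilon|x-y|\big(\|V-E+1\|_{L^\infty(I_{x,y})}+\|q_\varepsilon\|_\infty\big)\Big)\mathscr{E}(y),$$ where $\mathscr{E}(x)=\varepsilon^2|\psi'(x)|^2+|\psi(x)|^2$ and $I_{x,y}$ is the interval between $x$ and $y$. *)

theory Defs
  imports "HOL-Probability.Essential_Supremum"
begin

definition Linf_norm :: "real set \<Rightarrow> (real \<Rightarrow> real) \<Rightarrow> real" where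
  "Linf_norm S f = real_of_ereal (esssup (lebesgue_on S) (\<lambda>x. ereal \<bar>f x\<bar>))"

end

theory Submission
  imports Defs
begin

lemma Linf_nonneg: "Linf_norm S f \<ge> 0"
proof -
  let ?g = "\<lambda>x. ereal \<bar>f x\<bar>"
  consider "?g \<notin> borel_measurable (lebesgue_on S)"
    | "?g \<in> borel_measurable (lebesgue_on S)" "emeasure (lebesgue_on S) (space (lebesgue_on S)) = 0"
    | "?g \<in> borel_measurable (lebesgue_on S)" "emeasure (lebesgue_on S) (space (lebesgue_on S)) \<noteq> 0" by blast
  then show ?thesis
  proof cases
    case 1 then show ?thesis by (simp add: Linf_norm_def esssup_non_measurable top_ereal_def)
  next
    case 2 then show ?thesis by (simp add: Linf_norm_def esssup_zero_space)
  next
    case 3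
    have "esssup (lebesgue_on S) (\<lambda>x. 0::ereal) \<le> esssup (lebesgue_on S) ?g"
      by (rule esssup_mono) auto
    moreover have "esssup (lebesgue_on S) (\<lambda>x. 0::ereal) = 0" using 3 by (simp add: esssup_const)
    ultimately have "0 \<le> esssup (lebesgue_on S) ?g" by simp
    then show ?thesis unfolding Linf_norm_def by (simp add: real_of_ereal_pos)
  qed
qed

lemma Linf_AE:
  assumes m: "f \<in> borel_measurable (lebesgue_on S)"
    and C: "AE x in lebesgue_on S. \<bar>f x\<bar> \<le> C"
  shows "AE x in lebesgue_on S. \<bar>f x\<bar> \<le> Linf_norm S f"
proof -
  let ?g = "\<lambda>x. ereal \<bar>f x\<bar>"
  have gm: "?g \<in> borel_measurable (lebesgue_on S)" using m by measurable
  have le: "esssup (lebesgue_on S) ?g \<le> ereal C"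
    by (rule esssup_I[OF gm]) (use C in \<open>auto elim: eventually_mono\<close>)
  have ae: "AE x in lebesgue_on S. ?g x \<le> esssup (lebesgue_on S) ?g" by (rule esssup_AE)
  show ?thesis
  proof (cases "esssup (lebesgue_on S) ?g")
    case (real r)
    then show ?thesis using ae unfolding Linf_norm_def by (auto elim: eventually_mono)
  next
    case PInf then show ?thesis using le by simp
  next
    case MInf then show ?thesis using ae by (auto elim: eventually_mono)
  qed
qed

lemma AE_negl:
  assumes S: "S \<in> sets lebesgue" and P: "AE x in lebesgue_on S. P x"
  shows "\<exists>N. negligible N \<and> (\<forall>x\<in>S - N. P x)"
proof -
  have "AE x in lebesgue. x \<in> S \<longrightarrow> P x"
    using P S by (subst (asm) AE_restrict_space_iff) auto
  then obtain N where N: "{x \<in> space lebesgue. \<not> (x \<in> S \<longrightarrow> P x)} \<subseteq> N" "emeasure lebesgue N = 0" "N \<in> sets lebesgue"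
    by (rule AE_E)
  then show ?thesis by (intro exI[of _ N]) (auto simp: negligible_iff_null_sets null_sets_def)
qed

lemma discrete_gronwall:
  fixes e :: "nat \<Rightarrow> real"
  assumes r: "r \<ge> 1" and c: "c \<ge> 0" and step: "\<And>i. i < n \<Longrightarrow> e i \<le> r * e (Suc i) + c"
  shows "e 0 \<le> r^n * e n + n * r^n * c"
proof -
  have "m \<le> n \<Longrightarrow> e (n - m) \<le> r^m * e n + m * r^m * c" for m
  proof (induction m)
    case 0 then show ?case by simp
  next
    case (Suc m)
    have "e (n - Suc m) \<le> r * e (Suc (n - Suc m)) + c" using step Suc.prems by simp
    also have "Suc (n - Suc m) = n - m" using Suc.prems by simp
    also have "r * e (n - m) + c \<le> r * (r^m * e n + m * r^m * c) + c"
      using Suc r by (intro add_right_mono mult_left_mono) auto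
    also have "\<dots> \<le> r^(Suc m) * e n + Suc m * r^(Suc m) * c"
    proof -
      have "1 \<le> r^Suc m" using r by (meson one_le_power)
      then have "c \<le> r^Suc m * c" using c by (simp add: mult_le_cancel_right1)
      then show ?thesis by (simp add: algebra_simps)
    qed
    finally show ?case .
  qed
  from this[of n] show ?thesis by simp
qed

lemma inner_bound: "\<bar>inner (u::'a::real_inner) v\<bar> \<le> norm u * norm v"
  by (rule Cauchy_Schwarz_ineq2)

lemma alg:
  fixes Dt Ds Dp At As Ap :: "'a::real_inner"
  assumes e: "e > 0" and h: "h \<ge> 0"
    and h1: "norm (e^2 *\<^sub>R (Dt - Ds) - Om *\<^sub>R Ap) \<le> c1 * h^2"
    and h2: "norm (Dt - Dp) \<le> M2 * h" "norm (Ds - Dp) \<le> M2 * h"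
    and h3: "norm (At - Ap) \<le> M1 * h" "norm (As - Ap) \<le> M1 * h"
    and h4: "norm (At - As - h *\<^sub>R Dp) \<le> M2 * h^2"
    and b: "norm Ap \<le> M0" "norm As \<le> M0" "norm At \<le> M0"
      "norm Dp \<le> M1" "norm Ds \<le> M1" "norm Dt \<le> M1"
    and Om: "\<bar>Om\<bar> \<le> B * h"
    and pos: "M0 \<ge> 0" "M1 \<ge> 0" "M2 \<ge> 0" "B \<ge> 0" "c1 \<ge> 0"
  shows "\<bar>(e^2 * (norm Dt)^2 + (norm At)^2) - (e^2 * (norm Ds)^2 + (norm As)^2)\<bar>
     \<le> \<bar>Om + h\<bar> / e * (e^2 * (norm Dp)^2 + (norm Ap)^2)
        + (2*B*M0*M2 + 2*c1*M1 + 2*M1*M1 + 2*M2*M0) * h^2"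
proof -
  define r1 where "r1 = e^2 *\<^sub>R (Dt - Ds) - Om *\<^sub>R Ap"
  define r2 where "r2 = (Dt - Dp) + (Ds - Dp)"
  define r3 where "r3 = At - As - h *\<^sub>R Dp"
  define r4 where "r4 = (At - Ap) + (As - Ap)"
  have nr2: "norm r2 \<le> 2 * M2 * h" unfolding r2_def using h2 norm_triangle_ineq[of "Dt - Dp" "Ds - Dp"] by linarith
  have nr4: "norm r4 \<le> 2 * M1 * h" unfolding r4_def using h3 norm_triangle_ineq[of "At - Ap" "As - Ap"] by linarith
  have nDsum: "norm (Dt + Ds) \<le> 2 * M1" using b norm_triangle_ineq[of Dt Ds] by linarith
  have nAsum: "norm (At + As) \<le> 2 * M0" using b norm_triangle_ineq[of At As] by linarith
  have eq1: "e^2 * (norm Dt)^2 - e^2 * (norm Ds)^2 = inner (e^2 *\<^sub>R (Dt - Ds)) (Dt + Ds)"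
    by (simp add: power2_norm_eq_inner inner_add_right inner_diff_left inner_commute algebra_simps)
  have eq2: "(norm At)^2 - (norm As)^2 = inner (At - As) (At + As)"
    by (simp add: power2_norm_eq_inner inner_add_right inner_diff_left inner_commute algebra_simps)
  have d1: "e^2 *\<^sub>R (Dt - Ds) = Om *\<^sub>R Ap + r1" unfolding r1_def by simp
  have d2: "Dt + Ds = 2 *\<^sub>R Dp + r2" unfolding r2_def by (simp add: scaleR_2)
  have d3: "At - As = h *\<^sub>R Dp + r3" unfolding r3_def by simp
  have d4: "At + As = 2 *\<^sub>R Ap + r4" unfolding r4_def by (simp add: scaleR_2)
  have I1: "inner (e^2 *\<^sub>R (Dt - Ds)) (Dt + Ds) = 2 * Om * inner Ap Dp + inner (Om *\<^sub>R Ap) r2 + inner r1 (Dt + Ds)"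
    unfolding d1 d2 by (simp add: inner_add_left inner_add_right algebra_simps)
  have I2: "inner (At - As) (At + As) = 2 * h * inner Ap Dp + inner (h *\<^sub>R Dp) r4 + inner r3 (At + As)"
    unfolding d3 d4 by (simp add: inner_add_left inner_add_right inner_commute algebra_simps)
  have R1: "\<bar>inner (Om *\<^sub>R Ap) r2\<bar> \<le> (B*h*M0) * (2*M2*h)"
  proof -
    have "\<bar>inner (Om *\<^sub>R Ap) r2\<bar> \<le> norm (Om *\<^sub>R Ap) * norm r2" by (rule inner_bound)
    also have "\<dots> \<le> (B*h*M0) * (2*M2*h)"
      using Om b(1) nr2 pos h by (auto intro!: mult_mono simp: abs_mult)
    finally show ?thesis .
  qed
  have R2: "\<bar>inner r1 (Dt + Ds)\<bar> \<le> (c1*h^2) * (2*M1)"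
  proof -
    have "\<bar>inner r1 (Dt + Ds)\<bar> \<le> norm r1 * norm (Dt + Ds)" by (rule inner_bound)
    also have "\<dots> \<le> (c1*h^2) * (2*M1)" using h1 nDsum pos h unfolding r1_def[symmetric]
      by (auto intro!: mult_mono)
    finally show ?thesis .
  qed
  have R3: "\<bar>inner (h *\<^sub>R Dp) r4\<bar> \<le> (h*M1) * (2*M1*h)"
  proof -
    have "\<bar>inner (h *\<^sub>R Dp) r4\<bar> \<le> norm (h *\<^sub>R Dp) * norm r4" by (rule inner_bound)
    also have "\<dots> \<le> (h*M1) * (2*M1*h)" using h b(4) nr4 pos by (auto intro!: mult_mono)
    finally show ?thesis .
  qed
  have R4: "\<bar>inner r3 (At + As)\<bar> \<le> (M2*h^2) * (2*M0)"
  proof -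
    have "\<bar>inner r3 (At + As)\<bar> \<le> norm r3 * norm (At + As)" by (rule inner_bound)
    also have "\<dots> \<le> (M2*h^2) * (2*M0)" using h4 nAsum pos h unfolding r3_def[symmetric]
      by (auto intro!: mult_mono)
    finally show ?thesis .
  qed
  have main: "\<bar>2 * (Om + h) * inner Ap Dp\<bar> \<le> \<bar>Om + h\<bar> / e * (e^2 * (norm Dp)^2 + (norm Ap)^2)"
  proof -
    have "2 * \<bar>inner Ap Dp\<bar> \<le> 2 * (norm Ap * norm Dp)" using inner_bound[of Ap Dp] by simp
    also have "\<dots> \<le> (e^2 * (norm Dp)^2 + (norm Ap)^2) / e"
    proof -
      have "0 \<le> (e * norm Dp - norm Ap)^2" by simp
      then have "2 * (norm Ap * norm Dp) * e \<le> e^2 * (norm Dp)^2 + (norm Ap)^2"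
        by (simp add: power2_eq_square algebra_simps)
      then show ?thesis using e by (simp add: pos_le_divide_eq)
    qed
    finally have "2 * \<bar>inner Ap Dp\<bar> \<le> (e^2 * (norm Dp)^2 + (norm Ap)^2) / e" .
    then have "\<bar>Om + h\<bar> * (2 * \<bar>inner Ap Dp\<bar>) \<le> \<bar>Om + h\<bar> * ((e^2 * (norm Dp)^2 + (norm Ap)^2) / e)"
      by (rule mult_left_mono) simp
    moreover have "\<bar>2 * (Om + h) * inner Ap Dp\<bar> = \<bar>Om + h\<bar> * (2 * \<bar>inner Ap Dp\<bar>)"
      by (metis abs_mult abs_numeral mult.assoc mult.left_commute)
    ultimately show ?thesis by simp
  qed
  have "(e^2 * (norm Dt)^2 + (norm At)^2) - (e^2 * (norm Ds)^2 + (norm As)^2)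
     = 2 * (Om + h) * inner Ap Dp + (inner (Om *\<^sub>R Ap) r2 + inner r1 (Dt + Ds) + inner (h *\<^sub>R Dp) r4 + inner r3 (At + As))"
    using eq1 eq2 I1 I2 by (simp add: algebra_simps)
  moreover have "(B*h*M0) * (2*M2*h) + (c1*h^2) * (2*M1) + (h*M1) * (2*M1*h) + (M2*h^2) * (2*M0)
     = (2*B*M0*M2 + 2*c1*M1 + 2*M1*M1 + 2*M2*M0) * h^2"
    by (simp add: power2_eq_square algebra_simps)
  ultimately show ?thesis using main R1 R2 R3 R4 by (smt (verit))
qed

theorem lemma2p6:
  fixes L \<epsilon> E :: real and V q :: "real \<Rightarrow> real"
    and psi dpsi d2psi :: "real \<Rightarrow> complex"
  assumes L_pos: "L > 0"
    and V_cont: "continuous_on {0..L} V"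
    and eps_pos: "\<epsilon> > 0"
    and q_meas: "q \<in> borel_measurable (lebesgue_on {0..L})"
    and q_bdd: "\<exists>C. AE t in lebesgue_on {0..L}. \<bar>q t\<bar> \<le> C"
    and psi_deriv: "\<forall>t\<in>{0..L}. (psi has_vector_derivative dpsi t) (at t within {0..L})"
    and d2psi_int: "d2psi absolutely_integrable_on {0..L}"
    and d2psi_L2: "(\<lambda>t. (cmod (d2psi t))^2) integrable_on {0..L}"
    and dpsi_deriv: "\<forall>t\<in>{0..L}. (d2psi has_integral (dpsi t - dpsi 0)) {0..t}"
    and bc: "psi 0 = 0" "psi L = 0"
    and eq: "AE t in lebesgue_on {0..L}.
               - complex_of_real (\<epsilon>^2) * d2psi t + complex_of_real (V t + q t) * psi t
               = complex_of_real E * psi t"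
    and x: "x \<in> {0..L}" and y: "y \<in> {0..L}"
  shows "\<epsilon>^2 * (cmod (dpsi x))^2 + (cmod (psi x))^2
         \<le> exp ((1/\<epsilon>) * \<bar>x - y\<bar> *
                 (Linf_norm {min x y..max x y} (\<lambda>t. V t - E + 1) + Linf_norm {0..L} q))
           * (\<epsilon>^2 * (cmod (dpsi y))^2 + (cmod (psi y))^2)"
proof -
  define En where "En t = \<epsilon>^2 * (cmod (dpsi t))^2 + (cmod (psi t))^2" for t
  define lo where "lo = min x y"
  define hi where "hi = max x y"
  define a where "a = Linf_norm {lo..hi} (\<lambda>t. V t - E + 1)"
  define b where "b = Linf_norm {0..L} q"
  have sub: "{lo..hi} \<subseteq> {0..L}" using x y by (auto simp: lo_def hi_def)
  have a0: "a \<ge> 0" and b0: "b \<ge> 0" unfolding a_def b_def by (rule Linf_nonneg)+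
  have psi_cont: "continuous_on {0..L} psi"
    using psi_deriv continuous_on_vector_derivative by blast
  obtain M0 where M0: "M0 \<ge> 0" "\<And>t. t \<in> {0..L} \<Longrightarrow> cmod (psi t) \<le> M0"
  proof -
    have "bounded (psi ` {0..L})"
      using compact_continuous_image[OF psi_cont compact_Icc] compact_imp_bounded by blast
    then obtain M where "M > 0" "\<forall>z\<in>psi ` {0..L}. norm z \<le> M" by (auto simp: bounded_pos)
    then show ?thesis using that[of M] by auto
  qed
  obtain MV where MV: "MV \<ge> 0" "\<And>t. t \<in> {0..L} \<Longrightarrow> \<bar>V t\<bar> \<le> MV"
  proof -
    have "bounded (V ` {0..L})"
      using compact_continuous_image[OF V_cont compact_Icc] compact_imp_bounded by blast
    then obtain M where "M > 0" "\<forall>z\<in>V ` {0..L}. norm z \<le> M" by (auto simp: bounded_pos)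
    then show ?thesis using that[of M] by auto
  qed
  obtain Cq where Cq: "AE t in lebesgue_on {0..L}. \<bar>q t\<bar> \<le> Cq" using q_bdd by blast
  have AEq: "AE t in lebesgue_on {0..L}. \<bar>q t\<bar> \<le> b" unfolding b_def by (rule Linf_AE[OF q_meas Cq])
  have Vm: "(\<lambda>t. V t - E + 1) \<in> borel_measurable (lebesgue_on {lo..hi})"
    by (rule continuous_imp_measurable_on_sets_lebesgue)
      (auto intro!: continuous_intros continuous_on_subset[OF V_cont sub])
  have AEV: "AE t in lebesgue_on {lo..hi}. \<bar>V t - E + 1\<bar> \<le> a"
    unfolding a_def
  proof (rule Linf_AE[OF Vm])
    show "AE t in lebesgue_on {lo..hi}. \<bar>V t - E + 1\<bar> \<le> MV + \<bar>E\<bar> + 1"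
    proof (rule AE_I2)
      fix t assume "t \<in> space (lebesgue_on {lo..hi})"
      then have "t \<in> {0..L}" using sub by auto
      then show "\<bar>V t - E + 1\<bar> \<le> MV + \<bar>E\<bar> + 1" using MV(2)[of t] by linarith
    qed
  qed
  obtain N1 where N1: "negligible N1" and N1P: "\<And>t. t \<in> {0..L} - N1 \<Longrightarrow>
      (- complex_of_real (\<epsilon>^2) * d2psi t + complex_of_real (V t + q t) * psi t = complex_of_real E * psi t)
      \<and> \<bar>q t\<bar> \<le> b"
    using AE_negl[OF _ AE_conjI[OF eq AEq]] by auto
  obtain N2 where N2: "negligible N2" and N2P: "\<And>t. t \<in> {lo..hi} - N2 \<Longrightarrow> \<bar>V t - E + 1\<bar> \<le> a"
    using AE_negl[OF _ AEV] by auto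
  define N where "N = N1 \<union> N2"
  have negN: "negligible N" using N1 N2 by (simp add: N_def)
  define qc where "qc t = (if t \<in> N then 0 else q t)" for t
  have qc_b: "\<bar>qc t\<bar> \<le> b" if "t \<in> {0..L}" for t
    using N1P[of t] that b0 by (auto simp: qc_def N_def)
  define B where "B = MV + b + \<bar>E\<bar>"
  define w where "w t = V t + qc t - E" for t
  have wB: "\<bar>w t\<bar> \<le> B" if "t \<in> {0..L}" for t
    using qc_b[OF that] MV(2)[OF that] unfolding w_def B_def by linarith
  have B0: "B \<ge> 0" using MV b0 by (simp add: B_def)
  have eqw: "\<epsilon>^2 *\<^sub>R d2psi t = w t *\<^sub>R psi t" if "t \<in> {0..L} - N" for t
  proof -
    have "t \<in> {0..L} - N1" "t \<notin> N" using that by (auto simp: N_def)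
    from N1P[OF this(1)] have e: "- complex_of_real (\<epsilon>^2) * d2psi t + complex_of_real (V t + q t) * psi t = complex_of_real E * psi t" by blast
    have "complex_of_real (\<epsilon>^2) * d2psi t = complex_of_real (V t + q t) * psi t - complex_of_real E * psi t"
      using e by (simp add: algebra_simps)
    then show ?thesis using \<open>t \<notin> N\<close> by (simp add: w_def qc_def scaleR_conv_of_real algebra_simps)
  qed
  have d2int: "(d2psi has_integral (dpsi t - dpsi s)) {s..t}"
    if "s \<in> {0..L}" "t \<in> {0..L}" "s \<le> t" for s t
  proof -
    have "d2psi integrable_on {s..t}"
    proof (rule integrable_on_subinterval)
      show "d2psi integrable_on {0..L}" using d2psi_int absolutely_integrable_on_def by blast
      show "{s..t} \<subseteq> {0..L}" using that by auto
    qed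
    then have i: "(d2psi has_integral integral {s..t} d2psi) {s..t}" by (rule integrable_integral)
    have i0: "(d2psi has_integral (dpsi s - dpsi 0)) {0..s}" using dpsi_deriv that(1) by blast
    have "(d2psi has_integral (dpsi s - dpsi 0) + integral {s..t} d2psi) {0..t}"
    proof (rule has_integral_combine[OF _ that(3) i0 i])
      show "0 \<le> s" using that(1) by simp
    qed
    moreover have "(d2psi has_integral (dpsi t - dpsi 0)) {0..t}" using dpsi_deriv that(2) by blast
    ultimately have "(dpsi s - dpsi 0) + integral {s..t} d2psi = dpsi t - dpsi 0"
      by (rule has_integral_unique)
    then have "integral {s..t} d2psi = dpsi t - dpsi s" by (simp add: algebra_simps)
    then show ?thesis using i by simp
  qed
  have wint: "((\<lambda>u. w u *\<^sub>R psi u) has_integral (\<epsilon>^2 *\<^sub>R (dpsi t - dpsi s))) {s..t}"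
    if "s \<in> {0..L}" "t \<in> {0..L}" "s \<le> t" for s t
  proof (rule has_integral_spike[OF negN _ has_integral_cmul[OF d2int[OF that]]])
    fix u assume "u \<in> {s..t} - N"
    then have "u \<in> {0..L} - N" using that by auto
    then show "w u *\<^sub>R psi u = \<epsilon>^2 *\<^sub>R d2psi u" using eqw by simp
  qed
  define M2 where "M2 = B * M0 / \<epsilon>^2"
  have M20: "M2 \<ge> 0" using B0 M0 by (simp add: M2_def)
  have Dlip0: "norm (dpsi t - dpsi s) \<le> M2 * (t - s)"
    if "s \<in> {0..L}" "t \<in> {0..L}" "s \<le> t" for s t
  proof -
    have "norm (\<epsilon>^2 *\<^sub>R (dpsi t - dpsi s)) \<le> (B * M0) * measure lborel (cbox s t)"
    proof (rule has_integral_bound)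
      show "0 \<le> B * M0" using B0 M0 by simp
      show "((\<lambda>u. w u *\<^sub>R psi u) has_integral (\<epsilon>^2 *\<^sub>R (dpsi t - dpsi s))) (cbox s t)"
        using wint[OF that] by simp
      fix u assume "u \<in> cbox s t"
      then have "u \<in> {0..L}" using that by auto
      then show "norm (w u *\<^sub>R psi u) \<le> B * M0"
        using wB M0 B0 by (auto intro!: mult_mono)
    qed
    then have "\<epsilon>^2 * norm (dpsi t - dpsi s) \<le> (B * M0) * (t - s)" using that by simp
    then show ?thesis using eps_pos by (simp add: M2_def field_simps)
  qed
  have Dlip: "norm (dpsi u - dpsi v) \<le> M2 * \<bar>u - v\<bar>" if "u \<in> {0..L}" "v \<in> {0..L}" for u v
  proof (cases "v \<le> u")
    case True then show ?thesis using Dlip0[OF that(2,1)] by simp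
  next
    case False then show ?thesis using Dlip0[OF that(1,2)] by (simp add: norm_minus_commute)
  qed
  define M1 where "M1 = norm (dpsi 0) + M2 * L"
  have M10: "M1 \<ge> 0" using M20 L_pos by (simp add: M1_def)
  have Dbd: "norm (dpsi t) \<le> M1" if "t \<in> {0..L}" for t
  proof -
    have "norm (dpsi t - dpsi 0) \<le> M2 * \<bar>t - 0\<bar>" using Dlip[OF that, of 0] L_pos by simp
    also have "\<dots> \<le> M2 * L" using that M20 by (auto intro: mult_left_mono)
    finally show ?thesis unfolding M1_def using norm_triangle_ineq2[of "dpsi t" "dpsi 0"] by linarith
  qed
  have Aint: "(dpsi has_integral (psi t - psi s)) {s..t}"
    if "s \<in> {0..L}" "t \<in> {0..L}" "s \<le> t" for s t
    by (rule fundamental_theorem_of_calculus[OF that(3)])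
      (use that in \<open>auto intro!: has_vector_derivative_within_subset[of _ _ _ "{0..L}"] psi_deriv[rule_format]\<close>)
  have Alip0: "norm (psi t - psi s) \<le> M1 * (t - s)"
    if "s \<in> {0..L}" "t \<in> {0..L}" "s \<le> t" for s t
  proof -
    have "norm (psi t - psi s) \<le> M1 * measure lborel (cbox s t)"
      by (rule has_integral_bound[OF M10]) (use Aint[OF that] Dbd that in auto)
    then show ?thesis using that by simp
  qed
  have Alip: "norm (psi u - psi v) \<le> M1 * \<bar>u - v\<bar>" if "u \<in> {0..L}" "v \<in> {0..L}" for u v
  proof (cases "v \<le> u")
    case True then show ?thesis using Alip0[OF that(2,1)] by simp
  next
    case False then show ?thesis using Alip0[OF that(1,2)] by (simp add: norm_minus_commute)
  qed
  have qcm: "qc \<in> borel_measurable (lebesgue_on {0..L})"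
    unfolding qc_def
  proof (rule measurable_If_set)
    show "(\<lambda>x. 0) \<in> borel_measurable (lebesgue_on {0..L})" by simp
    show "q \<in> borel_measurable (lebesgue_on {0..L})" by (rule q_meas)
    have "N \<in> sets lebesgue" using negN by (simp add: negligible_iff_null_sets null_setsD2)
    then show "N \<inter> space (lebesgue_on {0..L}) \<in> sets (lebesgue_on {0..L})"
      by (simp add: sets_restrict_space_iff sets.Int)
  qed
  have qcint: "qc integrable_on {0..L}"
    by (rule measurable_bounded_by_integrable_imp_integrable[OF qcm, of "\<lambda>_. b"])
      (use qc_b in auto)
  have wI: "w integrable_on {s..t}" if "s \<in> {0..L}" "t \<in> {0..L}" for s t
  proof -
    have "{s..t} \<subseteq> {0..L}" using that by auto
    then have "V integrable_on {s..t}" "qc integrable_on {s..t}"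
      using integrable_continuous_interval continuous_on_subset[OF V_cont] integrable_on_subinterval[OF qcint]
      by blast+
    then show ?thesis unfolding w_def by (intro integrable_diff integrable_add) auto
  qed
  define c1 where "c1 = B * M1"
  define C where "C = 2*B*M0*M2 + 2*c1*M1 + 2*M1*M1 + 2*M2*M0"
  have C0: "C \<ge> 0" using B0 M0 M10 M20 by (simp add: C_def c1_def)
  have stepl: "\<bar>En t - En s\<bar> \<le> (a + b) / \<epsilon> * (t - s) * En p + C * (t - s)^2"
    if st: "s \<le> p" "p \<le> t" "lo \<le> s" "t \<le> hi" for s t p
  proof -
    define h where "h = t - s"
    have h0: "h \<ge> 0" using st by (simp add: h_def)
    have inL: "s \<in> {0..L}" "t \<in> {0..L}" "p \<in> {0..L}" using st sub by auto
    have stL: "{s..t} \<subseteq> {0..L}" using inL by auto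
    define Om where "Om = integral {s..t} w"
    have Omi: "(w has_integral Om) {s..t}" unfolding Om_def using wI[OF inL(1,2)] by blast
    have cont: "measure lborel (cbox s t) = h" using st by (simp add: h_def)
    have H1: "norm (\<epsilon>^2 *\<^sub>R (dpsi t - dpsi s) - Om *\<^sub>R psi p) \<le> c1 * h^2"
    proof -
      have hi1: "((\<lambda>u. w u *\<^sub>R psi u - w u *\<^sub>R psi p) has_integral (\<epsilon>^2 *\<^sub>R (dpsi t - dpsi s) - Om *\<^sub>R psi p)) (cbox s t)"
        using has_integral_diff[OF wint[OF inL(1,2)] has_integral_scaleR_left[OF Omi]] st by simp
      have "norm (\<epsilon>^2 *\<^sub>R (dpsi t - dpsi s) - Om *\<^sub>R psi p) \<le> (B * (M1 * h)) * measure lborel (cbox s t)"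
      proof (rule has_integral_bound[OF _ hi1])
        show "0 \<le> B * (M1 * h)" using B0 M10 h0 by simp
        fix u assume u: "u \<in> cbox s t"
        then have uL: "u \<in> {0..L}" using stL by auto
        have "norm (psi u - psi p) \<le> M1 * \<bar>u - p\<bar>" by (rule Alip[OF uL inL(3)])
        also have "\<dots> \<le> M1 * h" using u st M10 by (auto simp: h_def intro!: mult_left_mono)
        finally have "norm (psi u - psi p) \<le> M1 * h" .
        then have "\<bar>w u\<bar> * norm (psi u - psi p) \<le> B * (M1 * h)"
          using wB[OF uL] by (intro mult_mono) auto
        then show "norm (w u *\<^sub>R psi u - w u *\<^sub>R psi p) \<le> B * (M1 * h)"
          by (simp add: scaleR_diff_right[symmetric])
      qed
      then show ?thesis using cont by (simp add: c1_def power2_eq_square mult.assoc)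
    qed
    have lipD: "norm (dpsi u - dpsi p) \<le> M2 * h" if "u \<in> {s..t}" for u
    proof -
      have "norm (dpsi u - dpsi p) \<le> M2 * \<bar>u - p\<bar>" using Dlip that stL inL by auto
      also have "\<dots> \<le> M2 * h" using that st M20 by (auto simp: h_def intro!: mult_left_mono)
      finally show ?thesis .
    qed
    have lipA: "norm (psi u - psi p) \<le> M1 * h" if "u \<in> {s..t}" for u
    proof -
      have "norm (psi u - psi p) \<le> M1 * \<bar>u - p\<bar>" using Alip that stL inL by auto
      also have "\<dots> \<le> M1 * h" using that st M10 by (auto simp: h_def intro!: mult_left_mono)
      finally show ?thesis .
    qed
    have H4: "norm (psi t - psi s - h *\<^sub>R dpsi p) \<le> M2 * h^2"
    proof -
      have hi4: "((\<lambda>u. dpsi u - dpsi p) has_integral (psi t - psi s - h *\<^sub>R dpsi p)) (cbox s t)"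
        using has_integral_diff[OF Aint[OF inL(1,2)] has_integral_const_real[of "dpsi p" s t]] st
        by (simp add: h_def)
      have "norm (psi t - psi s - h *\<^sub>R dpsi p) \<le> (M2 * h) * measure lborel (cbox s t)"
        by (rule has_integral_bound[OF _ hi4]) (use M20 h0 lipD in auto)
      then show ?thesis using cont by (simp add: power2_eq_square mult.assoc)
    qed
    have HOm: "\<bar>Om\<bar> \<le> B * h"
    proof -
      have "norm Om \<le> B * measure lborel (cbox s t)"
        by (rule has_integral_bound[OF B0]) (use Omi wB stL st in auto)
      then show ?thesis using cont by simp
    qed
    have tst: "t \<in> {s..t}" "s \<in> {s..t}" using st by auto
    have c10: "c1 \<ge> 0" using B0 M10 by (simp add: c1_def)
    note Alg = alg[OF eps_pos h0 H1 lipD[OF tst(1)] lipD[OF tst(2)] lipA[OF tst(1)] lipA[OF tst(2)] H4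
        M0(2)[OF inL(3)] M0(2)[OF inL(1)] M0(2)[OF inL(2)] Dbd[OF inL(3)] Dbd[OF inL(1)] Dbd[OF inL(2)]
        HOm M0(1) M10 M20 B0 c10]
    have HOmh: "\<bar>Om + h\<bar> \<le> (a + b) * h"
    proof -
      define z where "z u = (if u \<in> N then 0 else w u + 1)" for u
      have "((\<lambda>u. w u + 1) has_integral (Om + h)) {s..t}"
        using has_integral_add[OF Omi has_integral_const_real[of 1 s t]] st by (simp add: h_def)
      then have zi0: "(z has_integral (Om + h)) {s..t}"
        by (rule has_integral_spike[OF negN, rotated]) (simp add: z_def)
      then have zi: "(z has_integral (Om + h)) (cbox s t)" by simp
      have "norm (Om + h) \<le> (a + b) * measure lborel (cbox s t)"
      proof (rule has_integral_bound[OF _ zi])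
        show "0 \<le> a + b" using a0 b0 by simp
        fix u assume u: "u \<in> cbox s t"
        show "norm (z u) \<le> a + b"
        proof (cases "u \<in> N")
          case True then show ?thesis using a0 b0 by (simp add: z_def)
        next
          case False
          have uu: "u \<in> {0..L}" "u \<in> {lo..hi}" using u stL st by auto
          have "u \<notin> N1" "u \<notin> N2" using False unfolding N_def by auto
          then have u1: "u \<in> {0..L} - N1" and u2: "u \<in> {lo..hi} - N2" using uu by auto
          have "\<bar>V u - E + 1\<bar> \<le> a" using N2P[OF u2] .
          moreover have "\<bar>q u\<bar> \<le> b" using N1P[OF u1] by blast
          moreover have "z u = (V u - E + 1) + q u" using False by (simp add: z_def w_def qc_def)
          ultimately show ?thesis by simp
        qed
      qed
      then show ?thesis using cont by simp
    qed
    have "\<bar>En t - En s\<bar> \<le> \<bar>Om + h\<bar> / \<epsilon> * En p + C * h^2"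
      using Alg unfolding En_def C_def c1_def by simp
    also have "\<bar>Om + h\<bar> / \<epsilon> * En p \<le> (a + b) * h / \<epsilon> * En p"
    proof (rule mult_right_mono)
      show "0 \<le> En p" by (simp add: En_def)
      show "\<bar>Om + h\<bar> / \<epsilon> \<le> (a + b) * h / \<epsilon>" using HOmh eps_pos by (simp add: divide_right_mono)
    qed
    finally show ?thesis by (simp add: h_def)
  qed
  have goal: "En x \<le> exp ((1/\<epsilon>) * \<bar>x - y\<bar> * (a + b)) * En y"
  proof (cases "x = y")
    case True then show ?thesis by simp
  next
    case False
    define d where "d = \<bar>x - y\<bar>"
    have d0: "d > 0" using False by (simp add: d_def)
    define K where "K = (a + b) / \<epsilon>"
    have K0: "K \<ge> 0" using a0 b0 eps_pos by (simp add: K_def)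
    have Eny: "En y \<ge> 0" by (simp add: En_def)
    have lim: "En x \<le> exp (K*d) * En y + exp (K*d) * C * d^2 / real n" if n: "n \<ge> 1" for n :: nat
    proof -
      define hh where "hh = d / real n"
      have hh0: "hh \<ge> 0" using d0 by (simp add: hh_def)
      define pt where "pt i = x + real i * (y - x) / real n" for i :: nat
      have pt_in: "lo \<le> pt i \<and> pt i \<le> hi" if "i \<le> n" for i
      proof -
        define th where "th = real i / real n"
        have th: "0 \<le> th" "th \<le> 1" using that n by (auto simp: th_def)
        have pe: "pt i = x + th * (y - x)" by (simp add: pt_def th_def)
        show ?thesis
        proof (cases "x \<le> y")
          case True
          have "0 \<le> th * (y - x)" using th True by simp
          moreover have "th * (y - x) \<le> 1 * (y - x)" using th True by (intro mult_right_mono) auto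
          moreover have "lo = x" "hi = y" using True by (auto simp: lo_def hi_def)
          ultimately show ?thesis using pe by (smt (verit))
        next
          case False
          have "th * (y - x) \<le> 0" using th False by (simp add: mult_nonneg_nonpos)
          moreover have "1 * (y - x) \<le> th * (y - x)" using th False by (intro mult_right_mono_neg) auto
          moreover have "lo = y" "hi = x" using False by (auto simp: lo_def hi_def)
          ultimately show ?thesis using pe by (smt (verit))
        qed
      qed
      have pdiff: "\<bar>pt (Suc i) - pt i\<bar> = hh" for i
      proof -
        have "pt (Suc i) - pt i = (y - x) / real n" using n by (simp add: pt_def field_simps)
        then show ?thesis by (simp add: hh_def d_def abs_minus_commute)
      qed
      have stp: "En (pt i) \<le> (1 + K*hh) * En (pt (Suc i)) + C*hh^2" if i: "i < n" for i
      proof -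
        define s where "s = min (pt i) (pt (Suc i))"
        define t where "t = max (pt i) (pt (Suc i))"
        have "lo \<le> pt i \<and> pt i \<le> hi" "lo \<le> pt (Suc i) \<and> pt (Suc i) \<le> hi" using pt_in i by auto
        then have "s \<le> pt (Suc i)" "pt (Suc i) \<le> t" "lo \<le> s" "t \<le> hi" by (auto simp: s_def t_def)
        from stepl[OF this] have S: "\<bar>En t - En s\<bar> \<le> (a + b) / \<epsilon> * (t - s) * En (pt (Suc i)) + C * (t - s)^2" .
        have ts: "t - s = hh" using pdiff[of i] unfolding s_def t_def by linarith
        have "En (pt i) - En (pt (Suc i)) \<le> \<bar>En t - En s\<bar>"
          by (simp add: s_def t_def max_def min_def) linarith
        with S ts show ?thesis by (simp add: K_def algebra_simps)
      qed
      have G: "En (pt 0) \<le> (1 + K*hh)^n * En (pt n) + n * (1 + K*hh)^n * (C*hh^2)"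
        by (rule discrete_gronwall[where e = "\<lambda>i. En (pt i)"]) (use K0 hh0 C0 stp in auto)
      have p0: "pt 0 = x" by (simp add: pt_def)
      have pn: "pt n = y" using n by (simp add: pt_def)
      have rn: "(1 + K*hh)^n \<le> exp (K*d)"
      proof -
        have "(1 + K*hh)^n \<le> (exp (K*hh))^n"
          by (rule power_mono) (use K0 hh0 in auto)
        also have "\<dots> = exp (real n * (K*hh))" by (simp add: exp_of_nat_mult)
        also have "real n * (K*hh) = K*d" using n by (simp add: hh_def)
        finally show ?thesis .
      qed
      have t1: "(1 + K*hh)^n * En y \<le> exp (K*d) * En y" using rn Eny by (rule mult_right_mono)
      have t2: "n * (1 + K*hh)^n * (C*hh^2) \<le> exp (K*d) * C * d^2 / real n"
      proof -
        have "n * (1 + K*hh)^n * (C*hh^2) \<le> n * exp (K*d) * (C*hh^2)"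
          using rn C0 hh0 by (intro mult_right_mono mult_left_mono) auto
        also have "\<dots> = exp (K*d) * C * d^2 / real n" using n
          by (simp add: hh_def power2_eq_square field_simps)
        finally show ?thesis .
      qed
      show ?thesis using G t1 t2 p0 pn by simp
    qed
    show ?thesis
    proof (rule ccontr)
      assume "\<not> ?thesis"
      then have gt: "En x > exp (K*d) * En y" by (simp add: K_def d_def mult_ac)
      define Z where "Z = exp (K*d) * C * d^2"
      have Z0: "Z \<ge> 0" using C0 by (simp add: Z_def)
      obtain m :: nat where m: "Z / (En x - exp (K*d) * En y) < real m" using reals_Archimedean2 by blast
      define n where "n = Suc m"
      have n1: "n \<ge> 1" by (simp add: n_def)
      have "Z / (En x - exp (K*d) * En y) < real n" using m by (simp add: n_def)
      then have "Z < real n * (En x - exp (K*d) * En y)" using gt by (simp add: divide_less_eq mult.commute)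
      then have "Z / real n < En x - exp (K*d) * En y" using n1 by (simp add: divide_less_eq mult.commute)
      with lim[OF n1] show False by (simp add: Z_def)
    qed
  qed
  then show ?thesis unfolding En_def a_def b_def lo_def hi_def .
qed

end
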